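(* Let $k\ge 3$ and let $T$ be a tree with $|V(T)|=n$ that admits a $(3,k-2)$-completion set, and let $\mathrm{OPT}$ be the size of a minimum $(3,k-2)$-completion set of $T$. Then $(n-1)\cdot\frac{k-2}{2}\le \mathrm{OPT}$.
   Context: A connected graph $H$ has a $(3,\ell)$-cover if every edge of $H$ is contained in at least $\ell$ triangles. For a connected graph $G=(V,E)$, a set $E'\subseteq (V\times V)\setminus E$ of non-edges is a $(3,\ell)$-completion set of $G$ if $G\cup E'$ has a $(3,\ell)$-cover. *)

theory Defs
  imports Complex_Main
begin

definition all_pairs :: "'a set \<Rightarrow> 'a set set" where
  "all_pairs V = {{u, v} | u v. u \<in> V \<and> v \<in> V \<and> u \<noteq> v}"

definition ugraph :: "'a set \<Rightarrow> 'a set set \<Rightarrow> bool" where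
  "ugraph V E \<longleftrightarrow> finite V \<and> E \<subseteq> all_pairs V"

definition graph_connected :: "'a set \<Rightarrow> 'a set set \<Rightarrow> bool" where
  "graph_connected V E \<longleftrightarrow>
     (\<forall>u\<in>V. \<forall>v\<in>V. (u, v) \<in> {(x, y). {x, y} \<in> E}\<^sup>*)"

definition is_cycle :: "'a set \<Rightarrow> 'a set set \<Rightarrow> 'a list \<Rightarrow> bool" where
  "is_cycle V E xs \<longleftrightarrow> distinct xs \<and> length xs \<ge> 3 \<and> set xs \<subseteq> V \<and>
     (\<forall>i < length xs. {xs ! i, xs ! ((i + 1) mod length xs)} \<in> E)"

definition is_tree :: "'a set \<Rightarrow> 'a set set \<Rightarrow> bool" where
  "is_tree V E \<longleftrightarrow> ugraph V E \<and> V \<noteq> {} \<and> graph_connected V E \<and>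
     \<not> (\<exists>xs. is_cycle V E xs)"

definition triangles_on :: "'a set \<Rightarrow> 'a set set \<Rightarrow> 'a \<Rightarrow> 'a \<Rightarrow> nat" where
  "triangles_on V E u v = card {w \<in> V. {u, w} \<in> E \<and> {v, w} \<in> E}"

definition has_3_cover :: "'a set \<Rightarrow> 'a set set \<Rightarrow> nat \<Rightarrow> bool" where
  "has_3_cover V E l \<longleftrightarrow> graph_connected V E \<and>
     (\<forall>u v. {u, v} \<in> E \<longrightarrow> triangles_on V E u v \<ge> l)"

definition completion_set :: "'a set \<Rightarrow> 'a set set \<Rightarrow> nat \<Rightarrow> 'a set set \<Rightarrow> bool" where
  "completion_set V E l E' \<longleftrightarrow> E' \<subseteq> all_pairs V - E \<and> has_3_cover V (E \<union> E') l"

definition opt_completion :: "'a set \<Rightarrow> 'a set set \<Rightarrow> nat \<Rightarrow> nat" where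
  "opt_completion V E l = Min (card ` {E'. completion_set V E l E'})"

end

theory Submission
  imports Defs
begin

definition reach :: "'a set set \<Rightarrow> 'a \<Rightarrow> 'a \<Rightarrow> bool" where
  "reach F a b \<longleftrightarrow> (a, b) \<in> {(x, y). {x, y} \<in> F}\<^sup>*"

fun walk :: "'a set set \<Rightarrow> 'a list \<Rightarrow> bool" where
  "walk F [] = True"
| "walk F [x] = True"
| "walk F (x # y # xs) = ({x, y} \<in> F \<and> walk F (y # xs))"

lemma all_pairsD: "{a, b} \<in> all_pairs V \<Longrightarrow> a \<noteq> b \<and> a \<in> V \<and> b \<in> V"
  unfolding all_pairs_def by (auto simp: doubleton_eq_iff)

lemma edgeD: "E \<subseteq> all_pairs V \<Longrightarrow> {a, b} \<in> E \<Longrightarrow> a \<noteq> b \<and> a \<in> V \<and> b \<in> V"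
  by (meson all_pairsD subsetD)

lemma pair_ex: "E \<subseteq> all_pairs V \<Longrightarrow> e \<in> E \<Longrightarrow> \<exists>u v. e = {u, v}"
proof -
  assume "E \<subseteq> all_pairs V" "e \<in> E"
  then have "e \<in> all_pairs V" by (rule subsetD)
  then show ?thesis unfolding all_pairs_def by blast
qed

lemma pair_ex2: "E \<subseteq> all_pairs V \<Longrightarrow> e \<in> E \<Longrightarrow> x \<in> e \<Longrightarrow> \<exists>y. e = {x, y}"
proof -
  assume a: "E \<subseteq> all_pairs V" "e \<in> E" "x \<in> e"
  obtain u v where "e = {u, v}" using pair_ex[OF a(1,2)] by blast
  then show ?thesis using a(3) by (auto simp: insert_commute)
qed

lemma reach_refl: "reach F a a" by (simp add: reach_def)

lemma reach_edge: "{a, b} \<in> F \<Longrightarrow> reach F a b"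
  by (auto simp: reach_def)

lemma reach_trans: "reach F a b \<Longrightarrow> reach F b c \<Longrightarrow> reach F a c"
  by (auto simp: reach_def)

lemma reach_sym: "reach F a b \<Longrightarrow> reach F b a"
proof -
  have s: "sym {(x, y). {x, y} \<in> F}" by (auto simp: sym_def insert_commute)
  assume "reach F a b" then show ?thesis
    using sym_rtrancl[OF s] unfolding reach_def sym_def by blast
qed

lemma reach_mono: "F \<subseteq> F' \<Longrightarrow> reach F a b \<Longrightarrow> reach F' a b"
proof -
  assume "F \<subseteq> F'" "reach F a b"
  moreover have "{(x, y). {x, y} \<in> F} \<subseteq> {(x, y). {x, y} \<in> F'}" using \<open>F \<subseteq> F'\<close> by auto
  ultimately show ?thesis unfolding reach_def using rtrancl_mono by blast
qed

lemma reach_split: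
  assumes "reach F a b"
  shows "reach (F - {e}) a b \<or> (\<exists>z\<in>e. reach (F - {e}) a z)"
  using assms unfolding reach_def
proof (induction rule: rtrancl_induct)
  case base then show ?case by simp
next
  case (step b c)
  then show ?case
  proof (cases "{b, c} = e")
    case True
    then show ?thesis using step by auto
  next
    case False
    then have bc: "(b, c) \<in> {(x, y). {x, y} \<in> F - {e}}" using step by auto
    from step(3) show ?thesis
    proof
      assume "(a, b) \<in> {(x, y). {x, y} \<in> F - {e}}\<^sup>*"
      then have "(a, c) \<in> {(x, y). {x, y} \<in> F - {e}}\<^sup>*" using bc by (rule rtrancl_into_rtrancl)
      then show ?thesis by (rule disjI1)
    next
      assume "\<exists>z\<in>e. (a, z) \<in> {(x, y). {x, y} \<in> F - {e}}\<^sup>*"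
      then show ?thesis by (rule disjI2)
    qed
  qed
qed

lemma reach_split2:
  assumes "reach F a b"
  shows "reach (F - {e}) a b \<or> (\<exists>z\<in>e. reach (F - {e}) z b)"
proof -
  from reach_split[OF reach_sym[OF assms], of e]
  show ?thesis
  proof
    assume "reach (F - {e}) b a" then show ?thesis using reach_sym by fast
  next
    assume "\<exists>z\<in>e. reach (F - {e}) b z"
    then obtain z where "z \<in> e" "reach (F - {e}) b z" by blast
    then show ?thesis using reach_sym[of "F - {e}" b z] by blast
  qed
qed

lemma walk_tl: "walk F (x # xs) \<Longrightarrow> walk F xs"
  by (cases xs) auto

lemma walk_append: "walk F (p @ q) \<Longrightarrow> walk F q"
  by (induction p) (auto dest: walk_tl)

lemma walk_reach: "walk F xs \<Longrightarrow> xs \<noteq> [] \<Longrightarrow> reach F (hd xs) (last xs)"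
proof (induction F xs rule: walk.induct)
  case (1 F) then show ?case by simp
next
  case (2 F x) then show ?case by (simp add: reach_refl)
next
  case (3 F x y xs)
  then show ?case using reach_edge reach_trans by fastforce
qed

lemma reach_walk:
  assumes "reach F a b"
  shows "\<exists>xs. walk F xs \<and> xs \<noteq> [] \<and> hd xs = a \<and> last xs = b \<and> distinct xs"
  using assms unfolding reach_def
proof (induction rule: converse_rtrancl_induct)
  case base then show ?case by (intro exI[of _ "[b]"]) simp
next
  case (step a y)
  then obtain ys where ys: "walk F ys" "ys \<noteq> []" "hd ys = y" "last ys = b" "distinct ys" by blast
  show ?case
  proof (cases "a \<in> set ys")
    case True
    then obtain p q where pq: "ys = p @ a # q" by (meson split_list)
    have "walk F (a # q)" using ys(1) pq walk_append by metis
    moreover have "last (a # q) = b" using ys(4) pq by simp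
    moreover have "distinct (a # q)" using ys(5) pq by simp
    ultimately show ?thesis by (intro exI[of _ "a # q"]) simp
  next
    case False
    obtain t where t: "ys = y # t" using ys(2,3) by (cases ys) auto
    have "walk F (a # ys)" using ys(1) t step(1) by simp
    then show ?thesis using False ys t by (intro exI[of _ "a # ys"]) simp
  qed
qed

lemma walk_nth: "walk F xs \<Longrightarrow> Suc i < length xs \<Longrightarrow> {xs ! i, xs ! Suc i} \<in> F"
proof (induction F xs arbitrary: i rule: walk.induct)
  case (3 F x y xs)
  then show ?case by (cases i) auto
qed auto

lemma walk_avoid: "walk F xs \<Longrightarrow> v \<notin> set xs \<Longrightarrow> v \<in> e \<Longrightarrow> walk (F - {e}) xs"
  by (induction F xs rule: walk.induct) auto

lemma no_cycle_path:
  assumes tree: "is_tree V E" and e: "{u, v} \<in> E" and uv: "u \<noteq> v"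
    and r: "reach (E - {{u, v}}) u v"
  shows False
proof -
  obtain xs where xs: "walk (E - {{u, v}}) xs" "xs \<noteq> []" "hd xs = u" "last xs = v" "distinct xs"
    using reach_walk[OF r] by blast
  have EV: "E \<subseteq> all_pairs V" using tree by (simp add: is_tree_def ugraph_def)
  have len2: "length xs \<ge> 2"
  proof (rule ccontr)
    assume "\<not> length xs \<ge> 2"
    then have "length xs = 1" using xs(2) by (cases xs) (auto simp: not_le)
    then obtain z where "xs = [z]" by (metis One_nat_def length_0_conv length_Suc_conv)
    then show False using xs uv by simp
  qed
  have len3: "length xs \<ge> 3"
  proof (rule ccontr)
    assume "\<not> length xs \<ge> 3"
    then have "length xs = 2" using len2 by simp
    then obtain a b where ab: "xs = [a, b]"
      by (cases xs; cases "tl xs"; auto)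
    then show False using xs by simp
  qed
  have edges: "\<forall>i < length xs. {xs ! i, xs ! ((i + 1) mod length xs)} \<in> E"
  proof (intro allI impI)
    fix i assume i: "i < length xs"
    show "{xs ! i, xs ! ((i + 1) mod length xs)} \<in> E"
    proof (cases "Suc i < length xs")
      case True
      then show ?thesis using walk_nth[OF xs(1) True] by simp
    next
      case False
      then have "i = length xs - 1" using i by simp
      then have "xs ! i = v" "(i + 1) mod length xs = 0"
        using xs(2,4) last_conv_nth[OF xs(2)] i by auto
      moreover have "xs ! 0 = u" using xs(2,3) hd_conv_nth by metis
      ultimately show ?thesis using e by (simp add: insert_commute)
    qed
  qed
  have "set xs \<subseteq> V"
  proof
    fix z assume "z \<in> set xs"
    then obtain i where i: "i < length xs" "xs ! i = z" by (meson in_set_conv_nth)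
    have "{xs ! i, xs ! ((i + 1) mod length xs)} \<in> all_pairs V" using edges i EV by blast
    then show "z \<in> V" using all_pairsD[of z "xs ! ((i + 1) mod length xs)" V] i by simp
  qed
  then have "is_cycle V E xs" using edges len3 xs(5) by (simp add: is_cycle_def)
  then show False using tree by (simp add: is_tree_def)
qed

lemma tree_conn: "is_tree V E \<Longrightarrow> a \<in> V \<Longrightarrow> b \<in> V \<Longrightarrow> reach E a b"
  by (simp add: is_tree_def graph_connected_def reach_def)

lemma parent_exists:
  assumes tree: "is_tree V E" and x: "x \<in> V" and w: "w \<in> V" and xw: "x \<noteq> w"
  shows "\<exists>y. {x, y} \<in> E \<and> \<not> reach (E - {{x, y}}) x w"
proof -
  obtain xs where xs: "walk E xs" "xs \<noteq> []" "hd xs = x" "last xs = w" "distinct xs"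
    using reach_walk[OF tree_conn[OF tree x w]] by blast
  obtain y rest where yr: "xs = x # y # rest"
    using xs xw by (cases xs; cases "tl xs"; auto)
  have e: "{x, y} \<in> E" using xs(1) yr by simp
  have EV: "E \<subseteq> all_pairs V" using tree by (simp add: is_tree_def ugraph_def)
  have xy: "x \<noteq> y" using edgeD[OF EV e] by simp
  show ?thesis
  proof (intro exI conjI, fact e, rule notI)
    assume r: "reach (E - {{x, y}}) x w"
    have "walk E (y # rest)" using xs(1) yr by simp
    moreover have "x \<notin> set (y # rest)" using xs(5) yr by simp
    ultimately have "walk (E - {{x, y}}) (y # rest)" by (rule walk_avoid) simp
    then have "reach (E - {{x, y}}) (hd (y # rest)) (last (y # rest))" by (rule walk_reach) simp
    then have "reach (E - {{x, y}}) y w" using xs(4) yr by simp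
    then have "reach (E - {{x, y}}) x y" by (rule reach_trans[OF r reach_sym])
    then show False using no_cycle_path[OF tree e xy] by simp
  qed
qed

lemma card_E_ge:
  assumes tree: "is_tree V E"
  shows "card V - 1 \<le> card E"
proof -
  have EV: "E \<subseteq> all_pairs V" and fV: "finite V" using tree by (auto simp: is_tree_def ugraph_def)
  obtain r where r: "r \<in> V" using tree by (auto simp: is_tree_def)
  have finE: "finite E"
  proof -
    have "all_pairs V \<subseteq> Pow V" by (auto simp: all_pairs_def)
    then show ?thesis using EV fV by (meson finite_Pow_iff finite_subset subset_trans)
  qed
  define p where "p v = (SOME y. {v, y} \<in> E \<and> \<not> reach (E - {{v, y}}) v r)" for v
  have pp: "{v, p v} \<in> E \<and> \<not> reach (E - {{v, p v}}) v r" if "v \<in> V - {r}" for v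
    unfolding p_def using someI_ex[OF parent_exists[OF tree _ r]] that by auto
  have inj: "inj_on (\<lambda>v. {v, p v}) (V - {r})"
  proof (rule inj_onI)
    fix u v assume u: "u \<in> V - {r}" and v: "v \<in> V - {r}" and eq: "{u, p u} = {v, p v}"
    show "u = v"
    proof (rule ccontr)
      assume "u \<noteq> v"
      then have e: "{u, p u} = {u, v}" "{v, p v} = {u, v}" using eq by (auto simp: doubleton_eq_iff)
      have "\<not> reach (E - {{u, v}}) u r" "\<not> reach (E - {{u, v}}) v r"
        using pp[OF u] pp[OF v] e by auto
      moreover have "reach E u r" using tree_conn[OF tree _ r] u by auto
      ultimately show False using reach_split2[of E u r "{u, v}"] by auto
    qed
  qed
  have "(\<lambda>v. {v, p v}) ` (V - {r}) \<subseteq> E" using pp by auto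
  then have "card (V - {r}) \<le> card E" using card_inj_on_le[OF inj _ finE] by blast
  then show ?thesis using r fV by simp
qed

lemma inj_charge:
  assumes tree: "is_tree V E" and w: "w \<in> V" and x: "x \<in> V"
    and e1: "{x, y1} \<in> E" and e2: "{x, y2} \<in> E" and y12: "y1 \<noteq> y2"
    and n1: "\<not> reach (E - {{x, y1}}) x w" and n2: "\<not> reach (E - {{x, y2}}) x w"
  shows False
proof -
  have EV: "E \<subseteq> all_pairs V" using tree by (simp add: is_tree_def ugraph_def)
  have xy1: "x \<noteq> y1" using edgeD[OF EV e1] by simp
  have ne: "{x, y1} \<noteq> {x, y2}" using y12 xy1 by (auto simp: doubleton_eq_iff)
  have "reach E x w" using tree_conn[OF tree x w] .
  then have r1: "reach (E - {{x, y1}}) y1 w" using reach_split2[of E x w "{x, y1}"] n1 by auto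
  have xy1r: "reach (E - {{x, y2}}) x y1" using reach_edge[of x y1] e1 ne by auto
  have c: "reach (E - {{x, y1}}) y1 x"
  proof -
    from reach_split[OF r1, of "{x, y2}"]
    show ?thesis
    proof
      assume "reach (E - {{x, y1}} - {{x, y2}}) y1 w"
      then have "reach (E - {{x, y2}}) y1 w" by (rule reach_mono[rotated]) blast
      then have False using n2 reach_trans[OF xy1r] by blast
      then show ?thesis ..
    next
      assume "\<exists>z\<in>{x, y2}. reach (E - {{x, y1}} - {{x, y2}}) y1 z"
      then obtain z where z0: "z \<in> {x, y2}" "reach (E - {{x, y1}} - {{x, y2}}) y1 z"
        by blast
      have z: "reach (E - {{x, y1}}) y1 z" using z0(2) by (rule reach_mono[rotated]) blast
      have y2x: "reach (E - {{x, y1}}) y2 x" using reach_edge[of y2 x] e2 ne by (auto simp: insert_commute)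
      show ?thesis
      proof (cases "z = x")
        case True then show ?thesis using z by simp
      next
        case False then have "z = y2" using z0(1) by simp
        then show ?thesis using reach_trans[OF z] y2x by simp
      qed
    qed
  qed
  show False by (rule no_cycle_path[OF tree e1 xy1 reach_sym[OF c]])
qed

lemma main_bound:
  assumes tree: "is_tree V E" and cs: "completion_set V E l E'"
  shows "(card V - 1) * l \<le> 2 * card E'"
proof -
  define G where "G = E \<union> E'"
  have EV: "E \<subseteq> all_pairs V" and fV: "finite V" using tree by (auto simp: is_tree_def ugraph_def)
  have E'V: "E' \<subseteq> all_pairs V" "E' \<inter> E = {}" using cs by (auto simp: completion_set_def)
  have GV: "G \<subseteq> all_pairs V" using EV E'V by (auto simp: G_def)
  have cov: "\<And>u v. {u, v} \<in> G \<Longrightarrow> triangles_on V G u v \<ge> l"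
    using cs by (auto simp: completion_set_def has_3_cover_def G_def)
  have finAP: "finite (all_pairs V)"
  proof -
    have "all_pairs V \<subseteq> Pow V" by (auto simp: all_pairs_def)
    then show ?thesis using fV by (meson finite_Pow_iff finite_subset)
  qed
  have finE: "finite E" using EV finAP finite_subset by blast
  have finE': "finite E'" using E'V finAP finite_subset by blast
  define B where "B e = {w \<in> V. \<forall>x\<in>e. {x, w} \<in> G}" for e
  define P where "P = Sigma E B"
  have finP: "finite P" unfolding P_def B_def using finE fV by (intro finite_SigmaI) auto
  have cardP: "card P = (\<Sum>e\<in>E. card (B e))" unfolding P_def
    using finE fV by (intro card_SigmaI) (auto simp: B_def)
  have Bl: "card (B e) \<ge> l" if eE0: "e \<in> E" for e
  proof -
    obtain u v where e: "e = {u, v}" using pair_ex[OF EV eE0] by blast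
    have "B e = {w \<in> V. {u, w} \<in> G \<and> {v, w} \<in> G}" unfolding B_def e by auto
    then show ?thesis using cov[of u v] eE0 e by (simp add: G_def triangles_on_def)
  qed
  have "(\<Sum>e\<in>E. l) \<le> (\<Sum>e\<in>E. card (B e))" using Bl by (intro sum_mono) auto
  then have P1: "card E * l \<le> card P" using cardP by simp
  define H where "H = {(a, b). {a, b} \<in> E'}"
  define S where "S f = {(a, b). {a, b} = f}" for f :: "'a set"
  have H_sub: "H \<subseteq> (\<Union>f\<in>E'. S f)" by (auto simp: H_def S_def)
  have Sf: "finite (S f) \<and> card (S f) \<le> 2" if fE: "f \<in> E'" for f
  proof -
    obtain u v where f: "f = {u, v}" using pair_ex[OF E'V(1) fE] by blast
    have sub: "S f \<subseteq> {(u, v), (v, u)}" by (auto simp: S_def f doubleton_eq_iff)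
    have c2: "card {(u, v), (v, u)} \<le> 2"
      by (rule card_insert_le_m1 [THEN order_trans]) (auto simp: card_insert_if)
    have fin: "finite {(u, v), (v, u)}" by simp
    have "card (S f) \<le> card {(u, v), (v, u)}" by (rule card_mono[OF fin sub])
    then show ?thesis using c2 finite_subset[OF sub fin] by linarith
  qed
  have finH: "finite H" using H_sub Sf finE' by (meson finite_UN_I finite_subset)
  have "card H \<le> card (\<Union>f\<in>E'. S f)" using H_sub Sf finE' by (intro card_mono) auto
  also have "\<dots> \<le> (\<Sum>f\<in>E'. card (S f))" using card_UN_le[OF finE'] by blast
  also have "\<dots> \<le> (\<Sum>f\<in>E'. 2)" using Sf by (intro sum_mono) auto
  finally have H2: "card H \<le> 2 * card E'" by simp
  define \<phi> where "\<phi> p = ((SOME x. x \<in> fst p \<and> \<not> reach (E - {fst p}) x (snd p)), snd p)" for p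
  have phi: "fst (\<phi> (e, w)) \<in> e \<and> \<not> reach (E - {e}) (fst (\<phi> (e, w))) w \<and> snd (\<phi> (e, w)) = w
      \<and> \<phi> (e, w) \<in> H" if ew: "(e, w) \<in> P" for e w
  proof -
    have eE: "e \<in> E" and wB: "w \<in> B e" using ew by (auto simp: P_def)
    obtain u v where e: "e = {u, v}" using pair_ex[OF EV eE] by blast
    have uv: "u \<noteq> v" using edgeD[OF EV, of u v] eE e by simp
    have wV: "w \<in> V" and uw: "{u, w} \<in> G" and vw: "{v, w} \<in> G" using wB e by (auto simp: B_def)
    have wu: "w \<noteq> u" using edgeD[OF GV uw] by blast
    have wv: "w \<noteq> v" using edgeD[OF GV vw] by blast
    have ex: "\<exists>x. x \<in> e \<and> \<not> reach (E - {e}) x w"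
    proof (rule ccontr)
      assume "\<not> ?thesis"
      then have "reach (E - {e}) u w" "reach (E - {e}) v w" using e by auto
      then have "reach (E - {e}) u v" using reach_sym reach_trans by metis
      then show False using no_cycle_path[OF tree _ uv] eE e by simp
    qed
    define x where "x = (SOME x. x \<in> e \<and> \<not> reach (E - {e}) x w)"
    have x: "x \<in> e" "\<not> reach (E - {e}) x w" using someI_ex[OF ex] unfolding x_def by auto
    have ph: "\<phi> (e, w) = (x, w)" by (simp add: \<phi>_def x_def)
    have xwG: "{x, w} \<in> G" using x(1) e uw vw by auto
    have "{x, w} \<noteq> e" using wu wv e by (auto simp: doubleton_eq_iff)
    then have "{x, w} \<notin> E" using x(2) reach_edge[of x w "E - {e}"] by auto
    then have "{x, w} \<in> E'" using xwG by (simp add: G_def)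
    then show ?thesis using ph x by (simp add: H_def)
  qed
  have inj: "inj_on \<phi> P"
  proof (rule inj_onI)
    fix p1 p2 assume p1: "p1 \<in> P" and p2: "p2 \<in> P" and eq: "\<phi> p1 = \<phi> p2"
    obtain e1 w1 where q1: "p1 = (e1, w1)" by (cases p1)
    obtain e2 w2 where q2: "p2 = (e2, w2)" by (cases p2)
    note f1 = phi[OF p1[unfolded q1]] and f2 = phi[OF p2[unfolded q2]]
    define x where "x = fst (\<phi> p1)"
    have "snd (\<phi> (e1, w1)) = snd (\<phi> (e2, w2))" using eq q1 q2 by simp
    then have w: "w1 = w2" using f1 f2 by simp
    have x1: "x \<in> e1" "\<not> reach (E - {e1}) x w1" using f1 q1 x_def by auto
    have x2: "x \<in> e2" "\<not> reach (E - {e2}) x w1" using f2 q2 x_def eq w by auto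
    have e1E: "e1 \<in> E" and e2E: "e2 \<in> E" and w1V: "w1 \<in> V"
      using p1 p2 q1 q2 by (auto simp: P_def B_def)
    obtain y1 where y1: "e1 = {x, y1}" using pair_ex2[OF EV e1E x1(1)] by blast
    obtain y2 where y2: "e2 = {x, y2}" using pair_ex2[OF EV e2E x2(1)] by blast
    have xV: "x \<in> V" using edgeD[OF EV, of x y1] e1E y1 by simp
    show "p1 = p2"
    proof (cases "y1 = y2")
      case True then show ?thesis using q1 q2 w y1 y2 by simp
    next
      case False
      have a1: "{x, y1} \<in> E" using e1E y1 by simp
      have a2: "{x, y2} \<in> E" using e2E y2 by simp
      have n1: "\<not> reach (E - {{x, y1}}) x w1" using x1(2) y1 by simp
      have n2: "\<not> reach (E - {{x, y2}}) x w1" using x2(2) y2 by simp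
      show ?thesis using inj_charge[OF tree w1V xV a1 a2 False n1 n2] ..
    qed
  qed
  have "\<phi> ` P \<subseteq> H" using phi by auto
  then have "card P \<le> card H" using card_inj_on_le[OF inj _ finH] by blast
  then have "card E * l \<le> 2 * card E'" using P1 H2 by linarith
  moreover have "(card V - 1) * l \<le> card E * l" using card_E_ge[OF tree] by simp
  ultimately show ?thesis by linarith
qed

theorem corollary1:
  fixes V :: "'a set" and E :: "'a set set" and k :: nat
  assumes "k \<ge> 3"
    and "is_tree V E"
    and "\<exists>E'. completion_set V E (k - 2) E'"
  shows "(real (card V) - 1) * ((real k - 2) / 2) \<le> real (opt_completion V E (k - 2))"
proof -
  define A where "A = card ` {E'. completion_set V E (k - 2) E'}"
  have fV: "finite V" using assms(2) by (auto simp: is_tree_def ugraph_def)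
  have finAP: "finite (all_pairs V)"
  proof -
    have "all_pairs V \<subseteq> Pow V" by (auto simp: all_pairs_def)
    then show ?thesis using fV by (meson finite_Pow_iff finite_subset)
  qed
  have "{E'. completion_set V E (k - 2) E'} \<subseteq> Pow (all_pairs V)"
    by (auto simp: completion_set_def)
  then have "finite A" unfolding A_def using finAP by (meson finite_Pow_iff finite_imageI finite_subset)
  moreover have "A \<noteq> {}" using assms(3) by (auto simp: A_def)
  ultimately have "Min A \<in> A" by (rule Min_in)
  then obtain E0 where E0: "completion_set V E (k - 2) E0" "card E0 = opt_completion V E (k - 2)"
    by (auto simp: A_def opt_completion_def)
  have "(card V - 1) * (k - 2) \<le> 2 * card E0" using main_bound[OF assms(2) E0(1)] .
  then have "real ((card V - 1) * (k - 2)) \<le> real (2 * card E0)" by linarith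
  moreover have "V \<noteq> {}" using assms(2) by (simp add: is_tree_def)
  then have "card V \<ge> 1" using fV by (simp add: Suc_leI card_gt_0_iff)
  ultimately have "(real (card V) - 1) * (real k - 2) \<le> 2 * real (card E0)"
    using assms(1) by (simp add: of_nat_diff)
  then show ?thesis using E0(2) by simp
qed

end
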